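(* Let $L>0$ and $f\in C^1_{\mathrm{pw}}[-L,L]$ with break points $-L=z_0<z_1<\dots<z_N=L$, so that $f\in C^1[z_{j-1},z_j]$ and on each $\tau_j=(z_{j-1},z_j)$ either $f'\le0$ throughout or $f'>0$ throughout. Suppose $f(x)\ge f_{\min}>0$ for all $x\in[-L,L]$. Then $$\prod_{\ell=1}^{N-1}\max\Big\{\frac{f^+(z_\ell)}{f^-(z_\ell)},1\Big\}\le\exp\Big(\frac{1}{f_{\min}}\mathrm{Var}(f)\Big)\quad\text{and}\quad\prod_{\ell=1}^{N-1}\max\Big\{\frac{f^-(z_\ell)}{f^+(z_\ell)},1\Big\}\le\exp\Big(\frac{1}{f_{\min}}\mathrm{Var}(f)\Big).$$
   Context: $C^1_{\mathrm{pw}}[-L,L]$ is the set of $g:[-L,L]\to\mathbb{R}$ for which there is a finite partition $-L=z_0<\dots<z_N=L$ with $g\in C^1[z_{j-1},z_j]$ for each $j$ and, on each $(z_{j-1},z_j)$, either $g'>0$ throughout or $g'\le0$ throughout. $f^+(z)$ and $f^-(z)$ are the right and left one-sided limits at $z$; $[f]_{z_j}=f^-(z_j)-f^+(z_j)$ for $1\le j\le N-1$; $\partial_{\mathrm{pw}}f=f'$ on each open subinterval; $\mathrm{Var}(f)=\sum_{\ell=1}^{N-1}|[f]_{z_\ell}|+\int_{-L}^L|\partial_{\mathrm{pw}}f(s)|\,ds$. *)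

theory Defs
  imports "HOL-Analysis.Analysis"
begin

definition C1_piece :: "real \<Rightarrow> real \<Rightarrow> (real \<Rightarrow> real) \<Rightarrow> bool" where
  "C1_piece a b f \<longleftrightarrow>
     (\<exists>g g'. (\<forall>x\<in>{a..b}. (g has_real_derivative g' x) (at x within {a..b}))
           \<and> continuous_on {a..b} g'
           \<and> (\<forall>x\<in>{a<..<b}. f x = g x))"

definition C1_pw :: "real \<Rightarrow> (real \<Rightarrow> real) \<Rightarrow> (nat \<Rightarrow> real) \<Rightarrow> nat \<Rightarrow> bool" where
  "C1_pw L f z N \<longleftrightarrow>
     z 0 = -L \<and> z N = L \<and> (\<forall>j<N. z j < z (Suc j))
     \<and> (\<forall>j\<in>{1..N}. C1_piece (z (j-1)) (z j) f
           \<and> ((\<forall>x\<in>{z (j-1)<..<z j}. deriv f x > 0)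
              \<or> (\<forall>x\<in>{z (j-1)<..<z j}. deriv f x \<le> 0)))"

definition fplus :: "(real \<Rightarrow> real) \<Rightarrow> real \<Rightarrow> real" where
  "fplus f x = Lim (at_right x) f"

definition fminus :: "(real \<Rightarrow> real) \<Rightarrow> real \<Rightarrow> real" where
  "fminus f x = Lim (at_left x) f"

definition jump :: "(real \<Rightarrow> real) \<Rightarrow> real \<Rightarrow> real" where
  "jump f x = fminus f x - fplus f x"

text \<open>Var(f) = sum of absolute jumps at interior break points plus the integral of
  the absolute piecewise derivative (which equals deriv f off the finitely many break points).\<close>
definition Var :: "real \<Rightarrow> (real \<Rightarrow> real) \<Rightarrow> (nat \<Rightarrow> real) \<Rightarrow> nat \<Rightarrow> real" where
  "Var L f z N = (\<Sum>l=1..N-1. \<bar>jump f (z l)\<bar>) + integral {-L..L} (\<lambda>s. \<bar>deriv f s\<bar>)"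

end

theory Submission
  imports Defs
begin

lemma piece_limits:
  assumes ab: "a < b" and c: "C1_piece a b f" and m: "\<forall>x\<in>{a<..<b}. f x \<ge> m"
  shows "fplus f a \<ge> m \<and> fminus f b \<ge> m"
proof -
  obtain g g' where d: "\<forall>x\<in>{a..b}. (g has_real_derivative g' x) (at x within {a..b})"
    and e: "\<forall>x\<in>{a<..<b}. f x = g x" using c unfolding C1_piece_def by blast
  have cont: "continuous_on {a..b} g"
    unfolding continuous_on_eq_continuous_within
    using d has_field_derivative_imp_has_derivative has_derivative_continuous by blast
  have ga: "(g \<longlongrightarrow> g a) (at_right a)"
    using cont ab at_within_Icc_at_right[OF ab]
    by (metis atLeastAtMost_iff continuous_on_def less_eq_real_def order_refl)
  have gb: "(g \<longlongrightarrow> g b) (at_left b)"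
    using cont ab at_within_Icc_at_left[OF ab]
    by (metis atLeastAtMost_iff continuous_on_def less_eq_real_def order_refl)
  have ev1: "eventually (\<lambda>x. x \<in> {a<..<b}) (at_right a)" using eventually_at_right_real[OF ab] .
  have ev2: "eventually (\<lambda>x. x \<in> {a<..<b}) (at_left b)" using eventually_at_left_real[OF ab] .
  have fa: "(f \<longlongrightarrow> g a) (at_right a)"
    by (rule tendsto_cong[THEN iffD2, OF _ ga]) (rule eventually_mono[OF ev1], use e in auto)
  have fb: "(f \<longlongrightarrow> g b) (at_left b)"
    by (rule tendsto_cong[THEN iffD2, OF _ gb]) (rule eventually_mono[OF ev2], use e in auto)
  have "fplus f a = g a" unfolding fplus_def using fa by (simp add: tendsto_Lim)
  moreover have "fminus f b = g b" unfolding fminus_def using fb by (simp add: tendsto_Lim)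
  moreover have "g a \<ge> m"
    by (rule tendsto_lowerbound[OF fa]) (rule eventually_mono[OF ev1], use m in auto)
  moreover have "g b \<ge> m"
    by (rule tendsto_lowerbound[OF fb]) (rule eventually_mono[OF ev2], use m in auto)
  ultimately show ?thesis by simp
qed

lemma zmono:
  assumes "\<forall>j<N. z j < z (Suc j)"
  shows "i \<le> j \<Longrightarrow> j \<le> N \<Longrightarrow> (z i :: real) \<le> z j"
proof (induction j)
  case 0 thus ?case by simp
next
  case (Suc j)
  show ?case
  proof (cases "i = Suc j")
    case False
    then have "z i \<le> z j" using Suc by simp
    also have "z j < z (Suc j)" using assms Suc by simp
    finally show ?thesis by simp
  qed simp
qed

lemma factor_bound:
  fixes a b m :: real
  assumes "m > 0" "a \<ge> m" "b \<ge> m"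
  shows "max (a / b) 1 \<le> exp (\<bar>b - a\<bar> / m)"
proof -
  have "a / b \<le> 1 + \<bar>b - a\<bar> / m"
  proof -
    have "a / b = 1 + (a - b) / b" using assms by (simp add: field_simps)
    also have "(a - b) / b \<le> \<bar>b - a\<bar> / b" using assms by (simp add: divide_right_mono)
    also have "\<bar>b - a\<bar> / b \<le> \<bar>b - a\<bar> / m" using assms by (simp add: frac_le)
    finally show ?thesis by simp
  qed
  also have "\<dots> \<le> exp (\<bar>b - a\<bar> / m)" by (metis add.commute exp_ge_add_one_self)
  finally have "a / b \<le> exp (\<bar>b - a\<bar> / m)" .
  moreover have "1 \<le> exp (\<bar>b - a\<bar> / m)" using assms by simp
  ultimately show ?thesis by simp
qed

theorem lemma6p1:
  fixes L fmin :: real and f :: "real \<Rightarrow> real" and z :: "nat \<Rightarrow> real" and N :: nat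
  assumes "L > 0"
    and "C1_pw L f z N"
    and "fmin > 0"
    and "\<forall>x\<in>{-L..L}. f x \<ge> fmin"
  shows "(\<Prod>l=1..N-1. max (fplus f (z l) / fminus f (z l)) 1) \<le> exp (Var L f z N / fmin)
       \<and> (\<Prod>l=1..N-1. max (fminus f (z l) / fplus f (z l)) 1) \<le> exp (Var L f z N / fmin)"
proof -
  have z0: "z 0 = -L" and zN: "z N = L" and inc: "\<forall>j<N. z j < z (Suc j)"
    and pc: "\<forall>j\<in>{1..N}. C1_piece (z (j-1)) (z j) f"
    using assms(2) unfolding C1_pw_def by auto
  have bnd: "fplus f (z l) \<ge> fmin \<and> fminus f (z l) \<ge> fmin" if l: "l \<in> {1..N-1}" for l
  proof -
    have lN: "1 \<le> l" "l < N" using l by auto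
    have m1: "\<forall>x\<in>{z l<..<z (Suc l)}. f x \<ge> fmin"
    proof
      fix x assume x: "x \<in> {z l<..<z (Suc l)}"
      have "z 0 \<le> z l" "z (Suc l) \<le> z N" using zmono[OF inc] lN by auto
      then show "f x \<ge> fmin" using x assms(4) z0 zN by auto
    qed
    have m2: "\<forall>x\<in>{z (l-1)<..<z l}. f x \<ge> fmin"
    proof
      fix x assume x: "x \<in> {z (l-1)<..<z l}"
      have "z 0 \<le> z (l-1)" "z l \<le> z N" using zmono[OF inc] lN by auto
      then show "f x \<ge> fmin" using x assms(4) z0 zN by auto
    qed
    have "Suc l \<in> {1..N}" using lN by auto
    then have "C1_piece (z l) (z (Suc l)) f" using pc by fastforce
    then have A: "fplus f (z l) \<ge> fmin" using piece_limits[OF _ _ m1] inc lN by blast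
    have "C1_piece (z (l-1)) (z l) f" using pc lN by auto
    moreover have "z (l-1) < z l" using inc lN
      by (metis Suc_diff_1 less_imp_diff_less less_le_trans zero_less_one)
    ultimately have B: "fminus f (z l) \<ge> fmin" using piece_limits[OF _ _ m2] by blast
    from A B show ?thesis by simp
  qed
  have intnn: "integral {-L..L} (\<lambda>s. \<bar>deriv f s\<bar>) \<ge> 0"
  proof (cases "(\<lambda>s. \<bar>deriv f s\<bar>) integrable_on {-L..L}")
    case True thus ?thesis by (rule integral_nonneg) simp
  next
    case False thus ?thesis by (simp add: not_integrable_integral)
  qed
  have S: "(\<Sum>l=1..N-1. \<bar>jump f (z l)\<bar>) / fmin \<le> Var L f z N / fmin"
    unfolding Var_def using intnn assms(3) by (simp add: divide_right_mono)
  have P1: "(\<Prod>l=1..N-1. max (fplus f (z l) / fminus f (z l)) 1)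
      \<le> (\<Prod>l=1..N-1. exp (\<bar>jump f (z l)\<bar> / fmin))"
    apply (rule prod_mono)
    using bnd factor_bound[OF assms(3)] unfolding jump_def by auto
  have P2: "(\<Prod>l=1..N-1. max (fminus f (z l) / fplus f (z l)) 1)
      \<le> (\<Prod>l=1..N-1. exp (\<bar>jump f (z l)\<bar> / fmin))"
    apply (rule prod_mono)
    using bnd factor_bound[OF assms(3)] unfolding jump_def by (auto simp: abs_minus_commute)
  have E: "(\<Prod>l=1..N-1. exp (\<bar>jump f (z l)\<bar> / fmin)) \<le> exp (Var L f z N / fmin)"
    using S by (simp add: exp_sum[symmetric] sum_divide_distrib[symmetric])
  show ?thesis using P1 P2 E by linarith
qed

end
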